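(* Let $d=2\delta$, $H\ge1$, $T_{\max}\ge2$, and consider the orthogonal setting of the context. Let $\theta^*=(\mathtt{A}^*,\mathtt{B}^*,P^* )$ satisfy $\ell(\theta^* )=0$, and set $\mathtt{C}^*=\mathtt{B}^{*\top}\mathtt{A}^*$. Then for every $T\in\{2,\dots,T_{\max}\}$, writing $p^*=(P^*_{T-1,1},\dots,P^*_{T-1,T})$: (i) $p^*_t=0$ for all $t<T-1$; (ii) $p^*_T\,\mathtt{C}^*_{i,i}=1$ for all $i\in\{1,\dots,d\}$; (iii) for every $i\in\{1,\dots,\delta\}$: $p^*_T\mathtt{C}^*_{2i-1,2i}+(\mathtt{C}^*_{2i-1,2i-1}+\mathtt{C}^*_{2i-1,2i})p^*_{T-1}=0$ and $p^*_T\mathtt{C}^*_{2i,2i-1}+(\mathtt{C}^*_{2i,2i}+\mathtt{C}^*_{2i,2i-1})p^*_{T-1}=0$; (iv) $\mathtt{C}^*_{2i-1,j}=\mathtt{C}^*_{2i,j}=0$ for all $i\in\{1,\dots,\delta\}$ and $j\notin\{2i-1,2i\}$.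
   Context: Orthogonal setting: $\mu\in\mathbb{C}^\delta$ has i.i.d. coordinates uniform on the unit circle, $\lambda=(\mu_1,\bar\mu_1,\dots,\mu_\delta,\bar\mu_\delta)\in\mathbb{C}^d$, and $s_t=e_t=\lambda^{t-1}$ (coordinatewise powers). Parameters $\mathtt{A},\mathtt{B}\in\mathbb{R}^{H\times d}$ with rows $a_h,b_h\in\mathbb{R}^d$ and $P\in\mathbb{R}^{T_{\max}\times T_{\max}}$. Model: $\mathcal{T}_\theta(e_{1:T})=\sum_{h=1}^H\sum_{t=1}^T P_{T-1,t}\langle e_t,\mathrm{diag}(a_h)e_{T-1}\rangle_{\mathbb{C}}\mathrm{diag}(b_h)e_t$, $\langle x,y\rangle_{\mathbb{C}}=\sum_i x_i\bar y_i$. Loss: $\ell(\theta)=\sum_{T=2}^{T_{\max}}\mathbb{E}\|\mathcal{T}_\theta(e_{1:T})-s_{T+1}\|^2$ (Hermitian norm). *)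

theory Defs
  imports "HOL-Probability.Probability"
begin

text \<open>Orthogonal setting. All vectors/matrices are 1-indexed functions on nat;
  delta = number of circle coordinates, d = 2 delta.
  mu :: nat => complex with coordinates mu 1, ..., mu delta.\<close>

definition circle_unif :: "complex measure" where
  "circle_unif = distr (uniform_measure lborel {0..2*pi}) borel cis"

definition mu_law :: "nat \<Rightarrow> (nat \<Rightarrow> complex) measure" where
  "mu_law \<delta> = PiM {1..\<delta>} (\<lambda>_. circle_unif)"

definition lam :: "(nat \<Rightarrow> complex) \<Rightarrow> nat \<Rightarrow> complex" where
  "lam \<mu> j = (if odd j then \<mu> ((j + 1) div 2) else cnj (\<mu> (j div 2)))"

text \<open>e_t = s_t = lambda^(t-1), coordinatewise.\<close>
definition evec :: "(nat \<Rightarrow> complex) \<Rightarrow> nat \<Rightarrow> nat \<Rightarrow> complex" where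
  "evec \<mu> t j = (lam \<mu> j) ^ (t - 1)"

definition cinner :: "nat \<Rightarrow> (nat \<Rightarrow> complex) \<Rightarrow> (nat \<Rightarrow> complex) \<Rightarrow> complex" where
  "cinner d x y = (\<Sum>i=1..d. x i * cnj (y i))"

text \<open>Model output T_theta(e_{1:T}), coordinate j. A, B: rows h in 1..H, columns in 1..d.\<close>
definition model :: "nat \<Rightarrow> nat \<Rightarrow> (nat \<Rightarrow> nat \<Rightarrow> real) \<Rightarrow> (nat \<Rightarrow> nat \<Rightarrow> real) \<Rightarrow>
    (nat \<Rightarrow> nat \<Rightarrow> real) \<Rightarrow> (nat \<Rightarrow> complex) \<Rightarrow> nat \<Rightarrow> nat \<Rightarrow> complex" where
  "model \<delta> H A B P \<mu> T j =
     (\<Sum>h=1..H. \<Sum>t=1..T.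
        of_real (P (T - 1) t)
        * cinner (2 * \<delta>) (evec \<mu> t) (\<lambda>i. of_real (A h i) * evec \<mu> (T - 1) i)
        * (of_real (B h j) * evec \<mu> t j))"

definition sq_err :: "nat \<Rightarrow> nat \<Rightarrow> (nat \<Rightarrow> nat \<Rightarrow> real) \<Rightarrow> (nat \<Rightarrow> nat \<Rightarrow> real) \<Rightarrow>
    (nat \<Rightarrow> nat \<Rightarrow> real) \<Rightarrow> (nat \<Rightarrow> complex) \<Rightarrow> nat \<Rightarrow> real" where
  "sq_err \<delta> H A B P \<mu> T =
     (\<Sum>j=1..2 * \<delta>. (cmod (model \<delta> H A B P \<mu> T j - evec \<mu> (T + 1) j))\<^sup>2)"

definition loss :: "nat \<Rightarrow> nat \<Rightarrow> nat \<Rightarrow> (nat \<Rightarrow> nat \<Rightarrow> real) \<Rightarrow> (nat \<Rightarrow> nat \<Rightarrow> real) \<Rightarrow>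
    (nat \<Rightarrow> nat \<Rightarrow> real) \<Rightarrow> real" where
  "loss \<delta> H Tmax A B P =
     (\<Sum>T=2..Tmax. \<integral>\<mu>. sq_err \<delta> H A B P \<mu> T \<partial>(mu_law \<delta>))"

definition Cmat :: "nat \<Rightarrow> (nat \<Rightarrow> nat \<Rightarrow> real) \<Rightarrow> (nat \<Rightarrow> nat \<Rightarrow> real) \<Rightarrow> nat \<Rightarrow> nat \<Rightarrow> real" where
  "Cmat H A B i j = (\<Sum>h=1..H. B h i * A h j)"

end

theory Submission
  imports Defs
begin

lemma meas_cis: "cis \<in> borel_measurable (uniform_measure lborel {0..2*pi})"
proof -
  have "cis \<in> borel_measurable borel"
    by (intro borel_measurable_continuous_onI continuous_intros)
  then show ?thesis by (simp add: measurable_cong_sets[OF sets_uniform_measure refl])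
qed

lemma prob_circle: "prob_space circle_unif"
  unfolding circle_unif_def
  by (intro prob_space.prob_space_distr prob_space_uniform_measure meas_cis) auto

lemma prob_mu: "prob_space (mu_law \<delta>)"
  unfolding mu_law_def by (intro prob_space_PiM prob_circle)

lemma sets_circle[simp]: "sets circle_unif = sets borel"
  unfolding circle_unif_def by simp

lemma space_circle[simp]: "space circle_unif = UNIV"
  unfolding circle_unif_def by simp

lemma space_mu: "space (mu_law \<delta>) = PiE {1..\<delta>} (\<lambda>_. UNIV)"
  unfolding mu_law_def by (simp add: space_PiM)

lemma AE_circle: "AE z in circle_unif. cmod z = 1"
  unfolding circle_unif_def
  by (subst AE_distr_iff) (auto simp: meas_cis)

lemma AE_mu: "AE \<mu> in mu_law \<delta>. \<forall>m\<in>{1..\<delta>}. cmod (\<mu> m) = 1"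
  unfolding mu_law_def
  by (intro AE_finite_allI finite_atLeastAtMost AE_PiM_component[where P="\<lambda>z. cmod z = 1"] prob_circle AE_circle)

lemma meas_cnj: "f \<in> borel_measurable M \<Longrightarrow> (\<lambda>x. cnj (f x)) \<in> borel_measurable M"
  by (rule borel_measurable_continuous_on[where f=cnj]) (auto intro: continuous_intros)

lemma meas_lam:
  assumes "j \<in> {1..2*\<delta>}"
  shows "(\<lambda>\<mu>. lam \<mu> j) \<in> borel_measurable (mu_law \<delta>)"
proof -
  have c: "(\<lambda>\<mu>. \<mu> c) \<in> borel_measurable (mu_law \<delta>)" if "c \<in> {1..\<delta>}" for c
  proof -
    have "(\<lambda>\<mu>. \<mu> c) \<in> measurable (mu_law \<delta>) circle_unif"
      unfolding mu_law_def using that by (rule measurable_component_singleton)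
    then show ?thesis by (simp add: measurable_cong_sets[OF refl sets_circle])
  qed
  show ?thesis
  proof (cases "odd j")
    case True
    then have "(j+1) div 2 \<in> {1..\<delta>}" using assms by (auto elim!: oddE)
    then show ?thesis using True c unfolding lam_def by simp
  next
    case False
    then have "j div 2 \<in> {1..\<delta>}" using assms by auto
    then have "(\<lambda>\<mu>. cnj (\<mu> (j div 2))) \<in> borel_measurable (mu_law \<delta>)"
      using c by (intro meas_cnj) 
    then show ?thesis using False unfolding lam_def by simp
  qed
qed

lemma meas_sq: "(\<lambda>\<mu>. sq_err \<delta> H A B P \<mu> T) \<in> borel_measurable (mu_law \<delta>)"
  unfolding sq_err_def model_def cinner_def evec_def
  by (intro borel_measurable_sum borel_measurable_power borel_measurable_continuous_on[where f=norm] continuous_on_norm_id borel_measurable_diff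
      borel_measurable_times borel_measurable_const meas_cnj meas_lam; simp)

lemma idx_odd: "(j::nat) \<in> {1..2*\<delta>} \<Longrightarrow> odd j \<Longrightarrow> (j+1) div 2 \<in> {1..\<delta>}"
  by (auto elim!: oddE)
lemma idx_even: "(j::nat) \<in> {1..2*\<delta>} \<Longrightarrow> \<not> odd j \<Longrightarrow> j div 2 \<in> {1..\<delta>}"
  by auto

lemma norm_lam:
  assumes "\<forall>m\<in>{1..\<delta>}. cmod (\<mu> m) = 1" "j \<in> {1..2*\<delta>}"
  shows "cmod (lam \<mu> j) = 1"
  using assms idx_odd[OF assms(2)] idx_even[OF assms(2)] unfolding lam_def by auto

lemma norm_evec:
  assumes "\<forall>m\<in>{1..\<delta>}. cmod (\<mu> m) = 1" "j \<in> {1..2*\<delta>}"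
  shows "cmod (evec \<mu> t j) = 1"
  using norm_lam[OF assms] unfolding evec_def by (simp add: norm_power)

lemma bound_model:
  assumes "\<forall>m\<in>{1..\<delta>}. cmod (\<mu> m) = 1" "j \<in> {1..2*\<delta>}"
  shows "cmod (model \<delta> H A B P \<mu> T j) \<le> (\<Sum>h=1..H. \<Sum>t=1..T. \<bar>P (T-1) t\<bar> * (\<Sum>i=1..2*\<delta>. \<bar>A h i\<bar>) * \<bar>B h j\<bar>)"
proof -
  have ci: "cmod (cinner (2*\<delta>) (evec \<mu> t) (\<lambda>i. of_real (A h i) * evec \<mu> (T - 1) i)) \<le> (\<Sum>i=1..2*\<delta>. \<bar>A h i\<bar>)" for t h
    unfolding cinner_def
    by (rule order_trans[OF norm_sum], rule sum_mono) (simp add: norm_mult norm_evec[OF assms(1)])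
  show ?thesis
    unfolding model_def
    apply (rule order_trans[OF norm_sum], rule sum_mono)
    apply (rule order_trans[OF norm_sum], rule sum_mono)
    apply (simp add: norm_mult norm_evec[OF assms])
    apply (intro mult_right_mono mult_left_mono ci)
    apply (auto intro!: ci[simplified])
    done
qed

lemma bound_sq:
  assumes "\<forall>m\<in>{1..\<delta>}. cmod (\<mu> m) = 1"
  shows "norm (sq_err \<delta> H A B P \<mu> T) \<le> (\<Sum>j=1..2*\<delta>. ((\<Sum>h=1..H. \<Sum>t=1..T. \<bar>P (T-1) t\<bar> * (\<Sum>i=1..2*\<delta>. \<bar>A h i\<bar>) * \<bar>B h j\<bar>) + 1)^2)"
proof -
  have "sq_err \<delta> H A B P \<mu> T \<le> (\<Sum>j=1..2*\<delta>. ((\<Sum>h=1..H. \<Sum>t=1..T. \<bar>P (T-1) t\<bar> * (\<Sum>i=1..2*\<delta>. \<bar>A h i\<bar>) * \<bar>B h j\<bar>) + 1)^2)"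
    unfolding sq_err_def
  proof (rule sum_mono)
    fix j assume j: "j \<in> {1..2*\<delta>}"
    have "cmod (model \<delta> H A B P \<mu> T j - evec \<mu> (T + 1) j) \<le> cmod (model \<delta> H A B P \<mu> T j) + cmod (evec \<mu> (T + 1) j)"
      by (rule norm_triangle_ineq4)
    also have "\<dots> \<le> (\<Sum>h=1..H. \<Sum>t=1..T. \<bar>P (T-1) t\<bar> * (\<Sum>i=1..2*\<delta>. \<bar>A h i\<bar>) * \<bar>B h j\<bar>) + 1"
      using bound_model[OF assms j] norm_evec[OF assms j] by simp
    finally show "(cmod (model \<delta> H A B P \<mu> T j - evec \<mu> (T + 1) j))\<^sup>2 \<le> ((\<Sum>h=1..H. \<Sum>t=1..T. \<bar>P (T-1) t\<bar> * (\<Sum>i=1..2*\<delta>. \<bar>A h i\<bar>) * \<bar>B h j\<bar>) + 1)^2"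
      by (intro power_mono) auto
  qed
  moreover have "0 \<le> sq_err \<delta> H A B P \<mu> T" unfolding sq_err_def by (intro sum_nonneg) auto
  ultimately show ?thesis by simp
qed

lemma integrable_sq: "integrable (mu_law \<delta>) (\<lambda>\<mu>. sq_err \<delta> H A B P \<mu> T)"
proof -
  interpret prob_space "mu_law \<delta>" by (rule prob_mu)
  show ?thesis
    apply (rule integrable_const_bound[OF _ meas_sq])
    using AE_mu apply eventually_elim
    apply (erule bound_sq)
    done
qed

lemma tendsto_lam:
  assumes "\<forall>m\<in>{1..\<delta>}. (\<lambda>n. s n m) \<longlonglongrightarrow> \<mu>0 m" "j \<in> {1..2*\<delta>}"
  shows "(\<lambda>n. lam (s n) j) \<longlonglongrightarrow> lam \<mu>0 j"
  using assms idx_odd[OF assms(2)] idx_even[OF assms(2)] unfolding lam_def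
  by (auto intro: tendsto_cnj)

lemma tendsto_sq:
  assumes "\<forall>m\<in>{1..\<delta>}. (\<lambda>n. s n m) \<longlonglongrightarrow> \<mu>0 m"
  shows "(\<lambda>n. sq_err \<delta> H A B P (s n) T) \<longlonglongrightarrow> sq_err \<delta> H A B P \<mu>0 T"
  unfolding sq_err_def model_def cinner_def evec_def
  by (intro tendsto_sum tendsto_power tendsto_norm tendsto_diff tendsto_mult tendsto_const tendsto_cnj
      tendsto_lam[OF assms]; simp)

lemma sq_nonneg: "0 \<le> sq_err \<delta> H A B P \<mu> T"
  unfolding sq_err_def by (intro sum_nonneg) auto

lemma AE_zero:
  assumes "loss \<delta> H Tmax A B P = 0" "T \<in> {2..Tmax}"
  shows "AE \<mu> in mu_law \<delta>. sq_err \<delta> H A B P \<mu> T = 0"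
proof -
  have nn: "\<And>T. T\<in>{2..Tmax} \<Longrightarrow> 0 \<le> (\<integral>\<mu>. sq_err \<delta> H A B P \<mu> T \<partial>(mu_law \<delta>))"
    by (auto intro!: integral_nonneg_AE simp: sq_nonneg)
  have "(\<integral>\<mu>. sq_err \<delta> H A B P \<mu> T \<partial>(mu_law \<delta>)) = 0"
  proof -
    have "(\<Sum>T\<in>{2..Tmax}. (\<integral>\<mu>. sq_err \<delta> H A B P \<mu> T \<partial>(mu_law \<delta>))) = 0 \<longleftrightarrow>
          (\<forall>T\<in>{2..Tmax}. (\<integral>\<mu>. sq_err \<delta> H A B P \<mu> T \<partial>(mu_law \<delta>)) = 0)"
      by (rule sum_nonneg_eq_0_iff) (auto simp: nn)
    then show ?thesis using assms unfolding loss_def by auto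
  qed
  then show ?thesis
    by (subst (asm) integral_nonneg_eq_0_iff_AE[OF integrable_sq]) (auto simp: sq_nonneg)
qed

lemma circle_ball_pos:
  assumes "cmod z0 = 1" "\<epsilon> > 0"
  shows "emeasure circle_unif (ball z0 \<epsilon>) > 0"
proof -
  obtain \<theta>0 where th: "\<theta>0 \<in> {0..2*pi}" "cis \<theta>0 = z0"
  proof -
    have z0: "z0 \<noteq> 0" using assms by auto
    have c: "cis (Arg z0) = z0" using cis_Arg[OF z0] assms by (simp add: sgn_div_norm)
    show ?thesis
    proof (cases "Arg z0 \<ge> 0")
      case True then show ?thesis using that[of "Arg z0"] c Arg_bounded[of z0] by auto
    next
      case False
      have "cis (Arg z0 + 2*pi) = z0" using c by (simp add: cis_mult[symmetric])
      then show ?thesis using that[of "Arg z0 + 2*pi"] False Arg_bounded[of z0] by auto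
    qed
  qed
  have "continuous_on UNIV (\<lambda>x. cis x)" by (intro continuous_intros)
  then have "continuous (at \<theta>0) cis" by (simp add: continuous_on_eq_continuous_at)
  then obtain \<eta> where eta: "\<eta> > 0" "\<forall>x'. dist x' \<theta>0 < \<eta> \<longrightarrow> dist (cis x') (cis \<theta>0) < \<epsilon>"
    using assms(2) unfolding continuous_at_eps_delta by blast
  define r where "r = min (\<eta>/2) pi"
  have r: "r > 0" "r < \<eta>" "r \<le> pi" using eta(1) pi_gt_zero unfolding r_def by auto
  obtain a b where ab: "a < b" "{a..b} \<subseteq> {0..2*pi}" "\<forall>x\<in>{a..b}. dist x \<theta>0 < \<eta>"
  proof (cases "\<theta>0 \<le> pi")
    case True
    show ?thesis by (rule that[of \<theta>0 "\<theta>0 + r"]) (use r th True in \<open>auto simp: dist_real_def\<close>)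
  next
    case False
    show ?thesis by (rule that[of "\<theta>0 - r" \<theta>0]) (use r th False in \<open>auto simp: dist_real_def\<close>)
  qed
  have sub: "{a..b} \<subseteq> {0..2*pi} \<inter> (cis -` ball z0 \<epsilon> \<inter> UNIV)"
    using ab eta th by (auto simp: dist_commute)
  have meas: "cis -` ball z0 \<epsilon> \<inter> UNIV \<in> sets lborel"
  proof -
    have "cis \<in> borel_measurable borel" by (intro borel_measurable_continuous_onI continuous_intros)
    from measurable_sets[OF this, of "ball z0 \<epsilon>"] show ?thesis by simp
  qed
  have "emeasure circle_unif (ball z0 \<epsilon>) = emeasure lborel ({0..2*pi} \<inter> (cis -` ball z0 \<epsilon> \<inter> UNIV)) / emeasure lborel {0..2*pi}"
    unfolding circle_unif_def
    apply (subst emeasure_distr[OF meas_cis])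
     apply simp
    apply (subst emeasure_uniform_measure)
    using meas by auto
  moreover have "emeasure lborel ({0..2*pi} \<inter> (cis -` ball z0 \<epsilon> \<inter> UNIV)) \<ge> emeasure lborel {a..b}"
    using sub meas by (intro emeasure_mono) auto
  moreover have "emeasure lborel {a..b} > 0" using ab by simp
  ultimately show ?thesis by (auto simp: ennreal_zero_less_divide)
qed

lemma box_pos:
  assumes "\<forall>m\<in>{1..\<delta>}. cmod (\<mu>0 m) = 1" "\<epsilon> > 0"
  shows "emeasure (mu_law \<delta>) (PiE {1..\<delta>} (\<lambda>m. ball (\<mu>0 m) \<epsilon>)) > 0"
proof -
  interpret product_sigma_finite "\<lambda>_. circle_unif"
    by (auto simp: product_sigma_finite_def intro: prob_space_imp_sigma_finite prob_circle)
  have "emeasure (mu_law \<delta>) (PiE {1..\<delta>} (\<lambda>m. ball (\<mu>0 m) \<epsilon>)) = (\<Prod>m\<in>{1..\<delta>}. emeasure circle_unif (ball (\<mu>0 m) \<epsilon>))"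
    unfolding mu_law_def by (rule emeasure_PiM) auto
  moreover have "(\<Prod>m\<in>{1..\<delta>}. emeasure circle_unif (ball (\<mu>0 m) \<epsilon>)) \<noteq> 0"
    using circle_ball_pos assms by (subst ennreal_prod_eq_0) fastforce
  ultimately show ?thesis by (simp add: zero_less_iff_neq_zero)
qed



lemma pointwise:
  assumes AE: "AE \<mu> in mu_law \<delta>. sq_err \<delta> H A B P \<mu> T = 0"
    and u: "\<forall>m\<in>{1..\<delta>}. cmod (\<mu>0 m) = 1"
  shows "sq_err \<delta> H A B P \<mu>0 T = 0"
proof (rule ccontr)
  let ?g = "\<lambda>\<mu>. sq_err \<delta> H A B P \<mu> T"
  let ?Box = "\<lambda>n::nat. PiE {1..\<delta>} (\<lambda>m. ball (\<mu>0 m) (inverse (real (Suc n))))"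
  assume "?g \<mu>0 \<noteq> 0"
  then have pos: "?g \<mu>0 > 0" using sq_nonneg[of \<delta> H A B P \<mu>0 T] by linarith
  have "\<exists>n. \<forall>\<mu>\<in>?Box n. ?g \<mu> > 0"
  proof (rule ccontr)
    assume "\<not> ?thesis"
    then have "\<forall>n. \<exists>\<mu>. \<mu> \<in> ?Box n \<and> ?g \<mu> \<le> 0"
    proof -
      assume a: "\<not> (\<exists>n. \<forall>\<mu>\<in>?Box n. ?g \<mu> > 0)"
      show ?thesis
      proof
        fix n
        from a obtain \<mu> where "\<mu> \<in> ?Box n" "\<not> ?g \<mu> > 0" by blast
        then show "\<exists>\<mu>. \<mu> \<in> ?Box n \<and> ?g \<mu> \<le> 0" by (intro exI[of _ \<mu>]) simp
      qed
    qed
    from choice[OF this] obtain s where s0: "\<forall>n. s n \<in> ?Box n \<and> ?g (s n) \<le> 0" by blast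
    then have s: "\<And>n. s n \<in> ?Box n \<and> ?g (s n) \<le> 0" by blast
    have conv: "\<forall>m\<in>{1..\<delta>}. (\<lambda>n. s n m) \<longlonglongrightarrow> \<mu>0 m"
    proof
      fix m assume m: "m \<in> {1..\<delta>}"
      have "(\<lambda>n. dist (s n m) (\<mu>0 m)) \<longlonglongrightarrow> 0"
      proof (rule tendsto_sandwich[OF _ _ tendsto_const LIMSEQ_inverse_real_of_nat])
        show "\<forall>\<^sub>F n in sequentially. 0 \<le> dist (s n m) (\<mu>0 m)" by simp
        show "\<forall>\<^sub>F n in sequentially. dist (s n m) (\<mu>0 m) \<le> inverse (real (Suc n))"
          using s m by (auto simp: PiE_iff dist_commute less_imp_le)
      qed
      then show "(\<lambda>n. s n m) \<longlonglongrightarrow> \<mu>0 m" by (subst tendsto_dist_iff)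
    qed
    have "?g \<mu>0 \<le> 0"
      using s by (intro LIMSEQ_le_const2[OF tendsto_sq[OF conv]]) blast
    then show False using pos by simp
  qed
  then obtain n where n: "\<forall>\<mu>\<in>?Box n. ?g \<mu> > 0" by blast
  from AE obtain N where N: "{\<mu> \<in> space (mu_law \<delta>). \<not> ?g \<mu> = 0} \<subseteq> N" "emeasure (mu_law \<delta>) N = 0" "N \<in> sets (mu_law \<delta>)"
    by (rule AE_E)
  have "?Box n \<subseteq> N"
  proof
    fix x assume x: "x \<in> ?Box n"
    then have "x \<in> space (mu_law \<delta>)" by (auto simp: space_mu PiE_iff)
    moreover have "?g x > 0" using n x by blast
    ultimately show "x \<in> N" using N(1) by auto
  qed
  then have "emeasure (mu_law \<delta>) (?Box n) \<le> emeasure (mu_law \<delta>) N" using N(3) by (rule emeasure_mono)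
  then have "emeasure (mu_law \<delta>) (?Box n) \<le> 0" using N(2) by simp
  moreover have "emeasure (mu_law \<delta>) (?Box n) > 0" by (rule box_pos[OF u]) simp
  ultimately show False by simp
qed

lemma pointwise_loss:
  assumes "loss \<delta> H Tmax A B P = 0" "T \<in> {2..Tmax}"
    and u: "\<forall>m\<in>{1..\<delta>}. cmod (\<mu>0 m) = 1" and j: "j \<in> {1..2*\<delta>}"
  shows "model \<delta> H A B P \<mu>0 T j = evec \<mu>0 (T + 1) j"
proof -
  have "sq_err \<delta> H A B P \<mu>0 T = 0" by (rule pointwise[OF AE_zero[OF assms(1,2)] u])
  then have "\<forall>j\<in>{1..2*\<delta>}. (cmod (model \<delta> H A B P \<mu>0 T j - evec \<mu>0 (T + 1) j))\<^sup>2 = 0"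
    unfolding sq_err_def by (subst (asm) sum_nonneg_eq_0_iff) auto
  then show ?thesis using j by auto
qed


definition ee :: "nat \<Rightarrow> nat \<Rightarrow> int \<Rightarrow> complex" where
  "ee N r x = cis (2 * pi * real r * of_int x / real N)"

lemma ee_add: "ee N r x * ee N r y = ee N r (x + y)"
  unfolding ee_def cis_mult by (simp add: algebra_simps add_divide_distrib)

lemma ee_pow: "ee N r x ^ n = ee N r (int n * x)"
  unfolding ee_def by (subst Complex.DeMoivre) (simp add: algebra_simps)

lemma ee_cnj: "cnj (ee N r x) = ee N r (- x)"
  unfolding ee_def cis_cnj by simp

lemma ee_diff: "ee N r (x - y) = ee N r x * ee N r (- y)"
  using ee_add[of N r x "-y"] by simp

lemma ee_0[simp]: "ee N r 0 = 1"
  unfolding ee_def by simp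

lemma norm_ee[simp]: "cmod (ee N r x) = 1"
  unfolding ee_def by simp

lemma RU:
  assumes N: "N > 0"
  shows "(\<Sum>r<N. ee N r x) = (if int N dvd x then of_nat N else 0)"
proof (cases "int N dvd x")
  case True
  then obtain q where q: "x = int N * q" by (auto elim: dvdE)
  have "ee N r x = 1" for r
  proof -
    have "2 * pi * real r * of_int x / real N = 2 * pi * of_int (int r * q)"
      using N by (simp add: q field_simps)
    then show ?thesis unfolding ee_def by simp
  qed
  then show ?thesis using True by simp
next
  case False
  define w where "w = ee N 1 x"
  have wr: "ee N r x = w ^ r" for r
    unfolding w_def ee_def by (subst Complex.DeMoivre) (simp add: algebra_simps)
  have w1: "w \<noteq> 1"
  proof
    assume "w = 1"
    then have "cos (2 * pi * of_int x / real N) = 1"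
      unfolding w_def ee_def by (metis cis.simps(1) one_complex.simps(1) of_nat_1 mult.right_neutral)
    then obtain n :: int where n: "2 * pi * of_int x / real N = of_int n * 2 * pi"
      unfolding cos_one_2pi_int by blast
    then have "real_of_int x = of_int n * real N" using N by (simp add: field_simps)
    then have "x = n * int N" by (metis of_int_eq_iff of_int_mult of_int_of_nat_eq)
    then show False using False by simp
  qed
  have wN: "w ^ N = 1"
  proof -
    have "w ^ N = ee N N x" by (simp add: wr)
    also have "\<dots> = cis (2 * pi * of_int x)" unfolding ee_def using N by (simp add: field_simps)
    also have "\<dots> = 1" by (rule cis_multiple_2pi) simp
    finally show ?thesis .
  qed
  have "(\<Sum>r<N. ee N r x) = (\<Sum>r<N. w ^ r)" by (simp add: wr)
  also have "\<dots> = 0" using geometric_sum[OF w1, of N] wN by simp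
  finally show ?thesis using False by simp
qed

definition gf :: "(nat \<Rightarrow> int) \<Rightarrow> nat \<Rightarrow> int" where
  "gf f i = (if odd i then f ((i+1) div 2) else - f (i div 2))"

definition tmu :: "(nat \<Rightarrow> int) \<Rightarrow> nat \<Rightarrow> nat \<Rightarrow> nat \<Rightarrow> complex" where
  "tmu f N r = (\<lambda>m. ee N r (f m))"

lemma lam_t: "lam (tmu f N r) i = ee N r (gf f i)"
  unfolding lam_def tmu_def gf_def by (simp add: ee_cnj)

lemma tmu_unit: "\<forall>m\<in>{1..\<delta>}. cmod (tmu f N r m) = 1"
  unfolding tmu_def by simp

lemma SW3: "(\<Sum>r\<in>R. \<Sum>h\<in>H. \<Sum>t\<in>T. \<Sum>i\<in>I. F r h t i) = (\<Sum>h\<in>H. \<Sum>t\<in>T. \<Sum>i\<in>I. \<Sum>r\<in>R. F r h t i)"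
proof -
  have "(\<Sum>r\<in>R. \<Sum>h\<in>H. \<Sum>t\<in>T. \<Sum>i\<in>I. F r h t i) = (\<Sum>h\<in>H. \<Sum>r\<in>R. \<Sum>t\<in>T. \<Sum>i\<in>I. F r h t i)"
    by (rule sum.swap)
  also have "\<dots> = (\<Sum>h\<in>H. \<Sum>t\<in>T. \<Sum>r\<in>R. \<Sum>i\<in>I. F r h t i)"
    by (rule sum.cong[OF refl], rule sum.swap)
  also have "\<dots> = (\<Sum>h\<in>H. \<Sum>t\<in>T. \<Sum>i\<in>I. \<Sum>r\<in>R. F r h t i)"
    by (rule sum.cong[OF refl], rule sum.cong[OF refl], rule sum.swap)
  finally show ?thesis .
qed

lemma model_t:
  "model \<delta> H A B P (tmu f N r) T j =
   (\<Sum>h=1..H. \<Sum>t=1..T. \<Sum>i=1..2*\<delta>. of_real (P (T-1) t * A h i * B h j) *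
       ee N r (int (t-1) * gf f i + - (int (T-1-1) * gf f i) + int (t-1) * gf f j))"
  unfolding model_def cinner_def evec_def lam_t
  by (simp add: sum_distrib_left sum_distrib_right ee_pow ee_cnj ee_add[symmetric] ee_diff mult_ac)

lemma K:
  fixes n0 :: int
  assumes N: "N > 0" and T: "T \<ge> 2"
    and hyp: "\<And>r. model \<delta> H A B P (tmu f N r) T j = evec (tmu f N r) (T+1) j"
  shows "(\<Sum>t=1..T. \<Sum>i=1..2*\<delta>. P (T-1) t * Cmat H A B j i *
            (if int N dvd ((int t - int T + 1) * gf f i + (int t - 1) * gf f j - n0) then 1 else 0))
         = (if int N dvd (int T * gf f j - n0) then 1 else 0)"
proof -
  define X where "X t i = int (t-1) * gf f i + - (int (T-1-1) * gf f i) + int (t-1) * gf f j + - n0" for t i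
  define c where "c h t i = P (T-1) t * A h i * B h j" for h t i
  define D where "D t i = (if int N dvd X t i then 1 else 0 :: real)" for t i
  have e1: "model \<delta> H A B P (tmu f N r) T j * ee N r (-n0) =
            (\<Sum>h=1..H. \<Sum>t=1..T. \<Sum>i=1..2*\<delta>. of_real (c h t i) * ee N r (X t i))" for r
    unfolding model_t X_def c_def by (simp add: sum_distrib_right mult.assoc ee_add)
  have e2: "evec (tmu f N r) (T+1) j * ee N r (-n0) = ee N r (int T * gf f j - n0)" for r
    unfolding evec_def lam_t by (simp add: ee_pow ee_add)
  have "(\<Sum>r<N. model \<delta> H A B P (tmu f N r) T j * ee N r (-n0)) = (\<Sum>r<N. evec (tmu f N r) (T+1) j * ee N r (-n0))"
    by (simp add: hyp)
  also have "\<dots> = (\<Sum>r<N. ee N r (int T * gf f j - n0))" by (intro sum.cong refl e2)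
  also have "\<dots> = of_real (real N * (if int N dvd (int T * gf f j - n0) then 1 else 0))"
    using RU[OF N] by simp
  finally have R: "(\<Sum>r<N. model \<delta> H A B P (tmu f N r) T j * ee N r (-n0)) = of_real (real N * (if int N dvd (int T * gf f j - n0) then 1 else 0))" .
  have "(\<Sum>r<N. model \<delta> H A B P (tmu f N r) T j * ee N r (-n0)) =
        (\<Sum>r<N. \<Sum>h=1..H. \<Sum>t=1..T. \<Sum>i=1..2*\<delta>. of_real (c h t i) * ee N r (X t i))"
    by (simp add: e1)
  also have "\<dots> = (\<Sum>h=1..H. \<Sum>t=1..T. \<Sum>i=1..2*\<delta>. \<Sum>r<N. of_real (c h t i) * ee N r (X t i))"
    by (rule SW3)
  also have "\<dots> = (\<Sum>h=1..H. \<Sum>t=1..T. \<Sum>i=1..2*\<delta>. of_real (c h t i * (real N * D t i)))"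
    unfolding D_def by (simp add: sum_distrib_left[symmetric] RU[OF N]) (intro sum.cong refl, simp)
  also have "\<dots> = of_real (real N * (\<Sum>h=1..H. \<Sum>t=1..T. \<Sum>i=1..2*\<delta>. c h t i * D t i))"
    by (simp add: sum_distrib_left mult_ac)
  finally have eqA: "(\<Sum>r<N. model \<delta> H A B P (tmu f N r) T j * ee N r (-n0)) = of_real (real N * (\<Sum>h=1..H. \<Sum>t=1..T. \<Sum>i=1..2*\<delta>. c h t i * D t i))" .
  have "real N * (\<Sum>h=1..H. \<Sum>t=1..T. \<Sum>i=1..2*\<delta>. c h t i * D t i) = real N * (if int N dvd (int T * gf f j - n0) then 1 else 0)"
    using trans[OF eqA[symmetric] R] by (simp only: of_real_eq_iff)
  then have L: "(\<Sum>h=1..H. \<Sum>t=1..T. \<Sum>i=1..2*\<delta>. c h t i * D t i) = (if int N dvd (int T * gf f j - n0) then 1 else 0)"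
    using N by simp
  have "(\<Sum>t=1..T. \<Sum>i=1..2*\<delta>. P (T-1) t * Cmat H A B j i * D t i) = (\<Sum>t=1..T. \<Sum>i=1..2*\<delta>. \<Sum>h=1..H. c h t i * D t i)"
    unfolding Cmat_def c_def by (intro sum.cong refl) (simp add: sum_distrib_left sum_distrib_right mult.assoc mult.left_commute)
  also have "\<dots> = (\<Sum>h=1..H. \<Sum>t=1..T. \<Sum>i=1..2*\<delta>. c h t i * D t i)"
  proof -
    have "(\<Sum>t=1..T. \<Sum>i=1..2*\<delta>. \<Sum>h=1..H. c h t i * D t i) = (\<Sum>t=1..T. \<Sum>h=1..H. \<Sum>i=1..2*\<delta>. c h t i * D t i)"
      by (rule sum.cong[OF refl], rule sum.swap)
    also have "\<dots> = (\<Sum>h=1..H. \<Sum>t=1..T. \<Sum>i=1..2*\<delta>. c h t i * D t i)"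
      by (rule sum.swap)
    finally show ?thesis .
  qed
  finally have L2: "(\<Sum>t=1..T. \<Sum>i=1..2*\<delta>. P (T-1) t * Cmat H A B j i * D t i) = (if int N dvd (int T * gf f j - n0) then 1 else 0)"
    using L by simp
  have "(\<Sum>t=1..T. \<Sum>i=1..2*\<delta>. P (T-1) t * Cmat H A B j i *
            (if int N dvd ((int t - int T + 1) * gf f i + (int t - 1) * gf f j - n0) then 1 else 0))
        = (\<Sum>t=1..T. \<Sum>i=1..2*\<delta>. P (T-1) t * Cmat H A B j i * D t i)"
  proof (intro sum.cong refl)
    fix t i assume t: "t \<in> {1..T}"
    have "X t i = (int t - int T + 1) * gf f i + (int t - 1) * gf f j - n0"
      using t T unfolding X_def by (simp add: of_nat_diff algebra_simps)
    then show "P (T-1) t * Cmat H A B j i * (if int N dvd ((int t - int T + 1) * gf f i + (int t - 1) * gf f j - n0) then 1 else 0)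
        = P (T-1) t * Cmat H A B j i * D t i" unfolding D_def by simp
  qed
  then show ?thesis using L2 by simp
qed

lemma hodd: "(j::nat) \<ge> 1 \<Longrightarrow> odd i \<Longrightarrow> ((i+1) div 2 = (j+1) div 2 \<longleftrightarrow> (if odd j then i = j else i = j - 1))"
  by (cases "odd j") (auto elim!: oddE evenE)
lemma heven: "(j::nat) \<ge> 1 \<Longrightarrow> \<not> odd i \<Longrightarrow> (i div 2 = (j+1) div 2 \<longleftrightarrow> (if odd j then i = j + 1 else i = j))"
  by (cases "odd j") (auto elim!: oddE evenE)
lemma hodd2: "odd (i::nat) \<Longrightarrow> ((i+1) div 2 = m \<longleftrightarrow> i = 2*m - 1 \<and> m \<ge> 1)"
  by (auto elim!: oddE)
lemma heven2: "\<not> odd (i::nat) \<Longrightarrow> m \<ge> 1 \<Longrightarrow> (i div 2 = m \<longleftrightarrow> i = 2*m)"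
  by (auto elim!: evenE)

lemma gf1:
  fixes j :: nat
  assumes j: "j \<ge> 1"
  shows "gf (\<lambda>m. if m = (j+1) div 2 then (if odd j then 1 else -1) else 0) i =
    (if i = j then 1 else if i = (if odd j then j+1 else j-1) then -1 else 0)"
proof (cases "odd i")
  case True
  then show ?thesis unfolding gf_def using hodd[OF j True] by (cases "odd j") auto
next
  case False
  then show ?thesis unfolding gf_def using heven[OF j False] j by (cases "odd j") auto
qed

lemma gf2:
  fixes j m' :: nat
  assumes j: "j \<ge> 1" and m': "m' \<ge> 1" "m' \<noteq> (j+1) div 2"
  shows "gf (\<lambda>m. if m = (j+1) div 2 then (if odd j then 1 else -1) else if m = m' then M else 0) i =
    (if i = j then 1 else if i = (if odd j then j+1 else j-1) then -1
     else if i = 2*m'-1 then M else if i = 2*m' then -M else 0)"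
proof (cases "odd i")
  case True
  then show ?thesis unfolding gf_def using hodd[OF j True] hodd2[OF True, of m'] m' j by (cases "odd j") auto
next
  case False
  then show ?thesis unfolding gf_def using heven[OF j False] heven2[OF False m'(1)] m' j by (cases "odd j") auto
qed

lemma small_dvd:
  fixes x :: int
  assumes "\<bar>x\<bar> < int N" shows "int N dvd x \<longleftrightarrow> x = 0"
proof
  assume "int N dvd x"
  then obtain q where x: "x = int N * q" by (auto elim: dvdE)
  show "x = 0"
  proof (rule ccontr)
    assume "x \<noteq> 0"
    then have "\<bar>q\<bar> \<ge> 1" using x by auto
    then have "int N * 1 \<le> int N * \<bar>q\<bar>" by (intro mult_left_mono) auto
    then have "\<bar>x\<bar> \<ge> int N" using x by (simp add: abs_mult)
    then show False using assms by simp
  qed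
qed auto


lemma sum2_delta:
  fixes F :: "nat \<Rightarrow> nat \<Rightarrow> real"
  assumes "t0 \<in> S" "i0 \<in> I" "finite S" "finite I"
  shows "(\<Sum>t\<in>S. \<Sum>i\<in>I. F t i * (if t = t0 \<and> i = i0 then 1 else 0)) = F t0 i0"
proof -
  have "(\<Sum>t\<in>S. \<Sum>i\<in>I. F t i * (if t = t0 \<and> i = i0 then 1 else 0)) =
        (\<Sum>t\<in>S. if t = t0 then (\<Sum>i\<in>I. if i = i0 then F t i else 0) else 0)"
    by (intro sum.cong refl) (auto intro!: sum.cong)
  also have "\<dots> = F t0 i0" using assms by simp
  finally show ?thesis .
qed

lemma row_ii:
  fixes C p :: "nat \<Rightarrow> real" and j T \<delta> :: nat
  assumes KK: "\<And>f N n0. N > 0 \<Longrightarrow> (\<Sum>t=1..T. \<Sum>i=1..2*\<delta>. p t * C i *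
            (if int N dvd ((int t - int T + 1) * gf f i + (int t - 1) * gf f j - n0) then 1 else 0))
         = (if int N dvd (int T * gf f j - n0) then 1 else 0)"
    and T: "T \<ge> 2" and j: "j \<in> {1..2*\<delta>}"
  shows "p T * C j = 1"
proof -
  define f :: "nat \<Rightarrow> int" where "f = (\<lambda>m. if m = (j+1) div 2 then (if odd j then 1 else -1) else 0)"
  define j' where "j' = (if odd j then j+1 else j-1)"
  define N where "N = 4*T"
  have j1: "j \<ge> 1" using j by auto
  have jj': "j' \<noteq> j" using j1 unfolding j'_def by auto
  have g: "gf f i = (if i = j then 1 else if i = j' then -1 else 0)" for i
    unfolding f_def j'_def by (rule gf1[OF j1])
  have gj: "gf f j = 1" using g by simp
  have ind: "(int N dvd ((int t - int T + 1) * gf f i + (int t - 1) * gf f j - int T)) \<longleftrightarrow> (t = T \<and> i = j)"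
    if t: "t \<in> {1..T}" for t i
  proof (cases "i = j")
    case True
    then have "(int t - int T + 1) * gf f i + (int t - 1) * gf f j - int T = 2 * int t - 2 * int T" by (simp add: gj)
    moreover have "\<bar>2 * int t - 2 * int T\<bar> < int N" using t T unfolding N_def by auto
    ultimately show ?thesis using small_dvd True by auto
  next
    case False
    show ?thesis
    proof (cases "i = j'")
      case True
      then have "(int t - int T + 1) * gf f i + (int t - 1) * gf f j - int T = -2" using jj' by (simp add: g)
      moreover have "\<bar>-2::int\<bar> < int N" using T unfolding N_def by auto
      ultimately show ?thesis using small_dvd False by auto
    next
      case False2: False
      then have "(int t - int T + 1) * gf f i + (int t - 1) * gf f j - int T = int t - 1 - int T" using False by (simp add: g)
      moreover have "\<bar>int t - 1 - int T\<bar> < int N" "int t - 1 - int T \<noteq> 0" using t T unfolding N_def by auto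
      ultimately show ?thesis using small_dvd False by auto
    qed
  qed
  have "(\<Sum>t=1..T. \<Sum>i=1..2*\<delta>. p t * C i * (if int N dvd ((int t - int T + 1) * gf f i + (int t - 1) * gf f j - int T) then 1 else 0))
        = (\<Sum>t=1..T. \<Sum>i=1..2*\<delta>. p t * C i * (if t = T \<and> i = j then 1 else 0))"
    by (intro sum.cong refl) (simp add: ind)
  also have "\<dots> = p T * C j" using j T by (intro sum2_delta) auto
  finally show ?thesis using KK[of N f "int T"] T unfolding N_def by (simp add: gj)
qed


lemma NL1:
  fixes a e T :: int
  assumes e: "\<bar>e\<bar> = 1" and a: "1 - T \<le> a" "a \<le> 0" and T: "T \<ge> 2"
  shows "\<bar>a * (e * (4 * T) + 1)\<bar> < 16 * T * T" "a * (e * (4 * T) + 1) = 0 \<longleftrightarrow> a = 0"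
proof -
  have b1: "\<bar>a\<bar> \<le> T" using a by auto
  have b2: "\<bar>e * (4 * T) + 1\<bar> \<le> 4 * T + 1" using e T by (auto simp: abs_if split: if_splits)
  have "\<bar>a * (e * (4 * T) + 1)\<bar> = \<bar>a\<bar> * \<bar>e * (4 * T) + 1\<bar>" by (simp add: abs_mult)
  also have "\<dots> \<le> T * (4 * T + 1)" using b1 b2 by (intro mult_mono) auto
  also have "\<dots> < 16 * T * T"
  proof -
    have "T \<le> T * T" using T by (simp add: mult_le_cancel_left1)
    moreover have "T * (4 * T + 1) = 4 * (T * T) + T" "16 * T * T = 16 * (T * T)" by (simp_all add: algebra_simps)
    ultimately show ?thesis using T by linarith
  qed
  finally show "\<bar>a * (e * (4 * T) + 1)\<bar> < 16 * T * T" .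
  have "e * (4 * T) + 1 \<noteq> 0" using e T by (auto simp: abs_if split: if_splits)
  then show "a * (e * (4 * T) + 1) = 0 \<longleftrightarrow> a = 0" by simp
qed

lemma NL2:
  fixes a e T :: int
  assumes e: "\<bar>e\<bar> = 1" and a: "1 - T \<le> a" "a \<le> 0" and T: "T \<ge> 2"
  shows "\<bar>e * (4 * T) * (a + 2) + a\<bar> < 16 * T * T" "e * (4 * T) * (a + 2) + a \<noteq> 0"
proof -
  have b1: "\<bar>a + 2\<bar> \<le> T" using a T by auto
  have eq: "\<bar>e * (4 * T) * (a + 2)\<bar> = 4 * T * \<bar>a + 2\<bar>" using e T by (simp add: abs_mult)
  have "\<bar>e * (4 * T) * (a + 2) + a\<bar> \<le> \<bar>e * (4 * T) * (a + 2)\<bar> + \<bar>a\<bar>" by (rule abs_triangle_ineq)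
  also have "\<dots> \<le> 4 * T * T + T"
  proof -
    have "4 * T * \<bar>a + 2\<bar> \<le> 4 * T * T" using b1 T by (intro mult_left_mono) auto
    then show ?thesis unfolding eq using a by linarith
  qed
  also have "\<dots> < 16 * T * T"
  proof -
    have "T \<le> T * T" using T by (simp add: mult_le_cancel_left1)
    moreover have "4 * T * T = 4 * (T * T)" "16 * T * T = 16 * (T * T)" by (simp_all add: algebra_simps)
    ultimately show ?thesis using T by linarith
  qed
  finally show "\<bar>e * (4 * T) * (a + 2) + a\<bar> < 16 * T * T" .
  show "e * (4 * T) * (a + 2) + a \<noteq> 0"
  proof (cases "a = -2")
    case True then show ?thesis by simp
  next
    case False
    then have "\<bar>a + 2\<bar> \<ge> 1" by auto
    then have "4 * T * 1 \<le> 4 * T * \<bar>a + 2\<bar>" using T by (intro mult_left_mono) auto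
    then have "\<bar>e * (4 * T) * (a + 2)\<bar> \<ge> 4 * T" unfolding eq by simp
    then show ?thesis using a T by auto
  qed
qed

lemma row_iv:
  fixes C p :: "nat \<Rightarrow> real" and j T \<delta> m' i0 :: nat
  assumes KK: "\<And>f N n0. N > 0 \<Longrightarrow> (\<Sum>t=1..T. \<Sum>i=1..2*\<delta>. p t * C i *
            (if int N dvd ((int t - int T + 1) * gf f i + (int t - 1) * gf f j - n0) then 1 else 0))
         = (if int N dvd (int T * gf f j - n0) then 1 else 0)"
    and T: "T \<ge> 2" and j: "j \<in> {1..2*\<delta>}" and pT: "p T \<noteq> 0"
    and m': "m' \<in> {1..\<delta>}" "m' \<noteq> (j+1) div 2" and i0: "i0 = 2*m'-1 \<or> i0 = 2*m'"
  shows "C i0 = 0"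
proof -
  define M :: int where "M = 4 * int T"
  define f :: "nat \<Rightarrow> int" where "f = (\<lambda>m. if m = (j+1) div 2 then (if odd j then 1 else -1) else if m = m' then M else 0)"
  define j' where "j' = (if odd j then j+1 else j-1)"
  define e :: int where "e = (if i0 = 2*m'-1 then 1 else -1)"
  define i1 where "i1 = (if i0 = 2*m'-1 then 2*m' else 2*m'-1)"
  define N where "N = 16*T*T"
  define n0 where "n0 = int T - 1 + e * M"
  have j1: "j \<ge> 1" using j by auto
  have m1: "m' \<ge> 1" using m' by auto
  have g: "gf f i = (if i = j then 1 else if i = j' then -1
     else if i = 2*m'-1 then M else if i = 2*m' then -M else 0)" for i
    unfolding f_def j'_def by (rule gf2[OF j1 m1 m'(2)])
  have pj': "(j'+1) div 2 = (j+1) div 2" using j1 unfolding j'_def by (cases "odd j") (auto elim!: oddE evenE)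
  have p0: "(i0+1) div 2 = m'" "(i1+1) div 2 = m'" using i0 m1 unfolding i1_def by auto
  have d: "i0 \<noteq> j" "i0 \<noteq> j'" "i1 \<noteq> j" "i1 \<noteq> j'" "i0 \<noteq> i1" "j \<noteq> j'"
    using p0 pj' m'(2) m1 j1 i0 unfolding i1_def j'_def by (auto split: if_splits)
  have e1: "\<bar>e\<bar> = 1" unfolding e_def by auto
  have gi0: "gf f i0 = e * M" using d i0 m1 unfolding g e_def by auto
  have gi1: "gf f i1 = - e * M" using d i0 m1 unfolding g e_def i1_def by auto
  have gj: "gf f j = 1" "gf f j' = -1" using d by (simp_all add: g)
  have go: "gf f i = 0" if "i \<noteq> j" "i \<noteq> j'" "i \<noteq> i0" "i \<noteq> i1" for i
    using that i0 unfolding g i1_def by auto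
  have T2: "2 * int T \<le> int T * int T" using T by (simp add: mult_right_mono)
  have Nint: "int N = 16 * int T * int T" unfolding N_def by simp
  have NgeT: "32 * int T \<le> int N" using T2 unfolding Nint by linarith
  have nd: "\<not> int N dvd x" if "x \<noteq> 0" "\<bar>x\<bar> < int N" for x
    using small_dvd[OF that(2)] that(1) by simp
  have ecases: "e = 1 \<or> e = -1" unfolding e_def by auto
  have ind: "(int N dvd ((int t - int T + 1) * gf f i + (int t - 1) * gf f j - n0)) \<longleftrightarrow> (t = T \<and> i = i0)"
    if t: "t \<in> {1..T}" for t i
  proof -
    define a where "a = int t - int T"
    have a: "1 - int T \<le> a" "a \<le> 0" using t unfolding a_def by auto
    have ta: "t = T \<longleftrightarrow> a = 0" using t unfolding a_def by auto
    consider "i = i0" | "i = i1" | "i = j" | "i = j'" | "i \<noteq> j" "i \<noteq> j'" "i \<noteq> i0" "i \<noteq> i1" by blast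
    then show ?thesis
    proof cases
      case 1
      have E: "(int t - int T + 1) * gf f i + (int t - 1) * gf f j - n0 = a * (e * (4 * int T) + 1)"
        unfolding 1 gi0 gj n0_def M_def a_def by (simp add: algebra_simps)
      show ?thesis unfolding E using small_dvd[of "a * (e * (4 * int T) + 1)" N] NL1[OF e1 a] T ta 1
        unfolding Nint by auto
    next
      case 2
      have E: "(int t - int T + 1) * gf f i + (int t - 1) * gf f j - n0 = (- e) * (4 * int T) * (a + 2) + a"
        unfolding 2 gi1 gj n0_def M_def a_def by (simp add: algebra_simps)
      have "\<bar>- e\<bar> = 1" using e1 by simp
      note nl = NL2[OF this a]
      show ?thesis unfolding E using nd[of "(- e) * (4 * int T) * (a + 2) + a"] nl T d 2 unfolding Nint by auto
    next
      case 3
      have E: "(int t - int T + 1) * gf f i + (int t - 1) * gf f j - n0 = 2 * a + 1 - e * (4 * int T)"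
        unfolding 3 gj n0_def M_def a_def by (simp add: algebra_simps)
      have Nint2: "int N = 16 * (int T * int T)" unfolding N_def by simp
      have "\<bar>2 * a + 1 - e * (4 * int T)\<bar> < int N" "2 * a + 1 - e * (4 * int T) \<noteq> 0"
        using ecases a T NgeT by auto
      then show ?thesis unfolding E using nd[of "2 * a + 1 - e * (4 * int T)"] d 3 by auto
    next
      case 4
      have E: "(int t - int T + 1) * gf f i + (int t - 1) * gf f j - n0 = - 1 - e * (4 * int T)"
        unfolding 4 gj n0_def M_def a_def by (simp add: algebra_simps)
      show ?thesis unfolding E using nd[of "- 1 - e * (4 * int T)"] ecases a T NgeT d 4 by auto
    next
      case 5
      have E: "(int t - int T + 1) * gf f i + (int t - 1) * gf f j - n0 = a - e * (4 * int T)"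
        unfolding go[OF 5] gj n0_def M_def a_def by (simp add: algebra_simps)
      show ?thesis unfolding E using nd[of "a - e * (4 * int T)"] ecases a T NgeT 5 by auto
    qed
  qed
  have rhs: "\<not> int N dvd (int T * gf f j - n0)"
  proof -
    have "int T * gf f j - n0 = 1 - e * (4 * int T)" unfolding gj n0_def M_def by simp
    then show ?thesis using nd[of "1 - e * (4 * int T)"] ecases T NgeT by auto
  qed
  have i0r: "i0 \<in> {1..2*\<delta>}" using i0 m' by auto
  have "(\<Sum>t=1..T. \<Sum>i=1..2*\<delta>. p t * C i * (if int N dvd ((int t - int T + 1) * gf f i + (int t - 1) * gf f j - n0) then 1 else 0))
        = (\<Sum>t=1..T. \<Sum>i=1..2*\<delta>. p t * C i * (if t = T \<and> i = i0 then 1 else 0))"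
    by (intro sum.cong refl) (simp add: ind)
  also have "\<dots> = p T * C i0" using i0r T by (intro sum2_delta) auto
  finally have "p T * C i0 = 0" using KK[of N f n0] T rhs unfolding N_def by simp
  then show ?thesis using pT by simp
qed


lemma row_i_iii:
  fixes C p :: "nat \<Rightarrow> real" and j T \<delta> :: nat
  assumes KK: "\<And>f N n0. N > 0 \<Longrightarrow> (\<Sum>t=1..T. \<Sum>i=1..2*\<delta>. p t * C i *
            (if int N dvd ((int t - int T + 1) * gf f i + (int t - 1) * gf f j - n0) then 1 else 0))
         = (if int N dvd (int T * gf f j - n0) then 1 else 0)"
    and T: "T \<ge> 2" and j: "j \<in> {1..2*\<delta>}" and ii: "p T * C j = 1"
    and iv: "\<forall>i\<in>{1..2*\<delta>}. i \<noteq> j \<and> i \<noteq> (if odd j then j+1 else j-1) \<longrightarrow> C i = 0"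
  shows "\<forall>t\<in>{1..<T-1}. p t = 0"
    and "p T * C (if odd j then j+1 else j-1) + (C j + C (if odd j then j+1 else j-1)) * p (T-1) = 0"
proof -
  define f :: "nat \<Rightarrow> int" where "f = (\<lambda>m. if m = (j+1) div 2 then (if odd j then 1 else -1) else 0)"
  define j' where "j' = (if odd j then j+1 else j-1)"
  define N where "N = 4*T"
  have j1: "j \<ge> 1" using j by auto
  have jj': "j' \<noteq> j" using j1 unfolding j'_def by auto
  have g: "gf f i = (if i = j then 1 else if i = j' then -1 else 0)" for i
    unfolding f_def j'_def by (rule gf1[OF j1])
  have gj: "gf f j = 1" "gf f j' = -1" using g jj' by simp_all
  have nd: "\<not> int N dvd x" if "x \<noteq> 0" "\<bar>x\<bar> < int N" for x
    using small_dvd[OF that(2)] that(1) by simp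
  have Cj: "C j \<noteq> 0" using ii by auto
  have iv': "C i = 0" if "i \<in> {1..2*\<delta>}" "i \<noteq> j" "i \<noteq> j'" for i
    using iv that unfolding j'_def by blast
  show pi: "\<forall>t\<in>{1..<T-1}. p t = 0"
  proof
    fix t0 assume t0: "t0 \<in> {1..<T-1}"
    define n0 where "n0 = 2 * int t0 - int T"
    have tm: "p t * C i * (if int N dvd ((int t - int T + 1) * gf f i + (int t - 1) * gf f j - n0) then 1 else 0)
       = p t * C i * (if t = t0 \<and> i = j then 1 else 0)" if t: "t \<in> {1..T}" and i: "i \<in> {1..2*\<delta>}" for t i
    proof -
      consider "i = j" | "i = j'" | "i \<noteq> j" "i \<noteq> j'" by blast
      then show ?thesis
      proof cases
        case 1
        have E: "(int t - int T + 1) * gf f i + (int t - 1) * gf f j - n0 = 2 * int t - 2 * int t0"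
          unfolding 1 gj n0_def by (simp add: algebra_simps)
        have "\<bar>2 * int t - 2 * int t0\<bar> < int N" using t t0 T unfolding N_def by auto
        then show ?thesis unfolding E using small_dvd 1 by auto
      next
        case 2
        have E: "(int t - int T + 1) * gf f i + (int t - 1) * gf f j - n0 = 2 * int T - 2 - 2 * int t0"
          unfolding 2 gj n0_def by (simp add: algebra_simps)
        have "\<bar>2 * int T - 2 - 2 * int t0\<bar> < int N" "2 * int T - 2 - 2 * int t0 \<noteq> 0"
          using t0 T unfolding N_def by auto
        then show ?thesis unfolding E using nd 2 jj' by auto
      next
        case 3
        then show ?thesis using iv'[OF i] by simp
      qed
    qed
    have rhs: "\<not> int N dvd (int T * gf f j - n0)"
    proof -
      have "int T * gf f j - n0 = 2 * int T - 2 * int t0" unfolding gj n0_def by simp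
      moreover have "\<bar>2 * int T - 2 * int t0\<bar> < int N" "2 * int T - 2 * int t0 \<noteq> 0"
        using t0 T unfolding N_def by auto
      ultimately show ?thesis using nd by simp
    qed
    have "(\<Sum>t=1..T. \<Sum>i=1..2*\<delta>. p t * C i * (if int N dvd ((int t - int T + 1) * gf f i + (int t - 1) * gf f j - n0) then 1 else 0))
        = (\<Sum>t=1..T. \<Sum>i=1..2*\<delta>. p t * C i * (if t = t0 \<and> i = j then 1 else 0))"
      by (intro sum.cong refl tm) auto
    also have "\<dots> = p t0 * C j" using j t0 by (intro sum2_delta) auto
    finally have "p t0 * C j = 0" using KK[of N f n0] T rhs unfolding N_def by simp
    then show "p t0 = 0" using Cj by simp
  qed
  define n0 where "n0 = int T - 2"
  have tm: "p t * C i * (if int N dvd ((int t - int T + 1) * gf f i + (int t - 1) * gf f j - n0) then 1 else 0)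
       = (if t = T - 1 \<and> i = j then p t * C i else 0) + (if i = j' then p t * C i else 0)"
    if t: "t \<in> {1..T}" and i: "i \<in> {1..2*\<delta>}" for t i
  proof -
    consider "i = j" | "i = j'" | "i \<noteq> j" "i \<noteq> j'" by blast
    then show ?thesis
    proof cases
      case 1
      have E: "(int t - int T + 1) * gf f i + (int t - 1) * gf f j - n0 = 2 * int t - 2 * int T + 2"
        unfolding 1 gj n0_def by (simp add: algebra_simps)
      have "\<bar>2 * int t - 2 * int T + 2\<bar> < int N" using t T unfolding N_def by auto
      moreover have "2 * int t - 2 * int T + 2 = 0 \<longleftrightarrow> t = T - 1" using t T by auto
      ultimately show ?thesis unfolding E using small_dvd 1 jj' by auto
    next
      case 2
      have E: "(int t - int T + 1) * gf f i + (int t - 1) * gf f j - n0 = 0"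
        unfolding 2 gj n0_def by (simp add: algebra_simps)
      show ?thesis unfolding E using 2 jj' by auto
    next
      case 3
      then show ?thesis using iv'[OF i] by simp
    qed
  qed
  have rhs: "\<not> int N dvd (int T * gf f j - n0)"
  proof -
    have "int T * gf f j - n0 = 2" unfolding gj n0_def by simp
    moreover have "\<bar>2::int\<bar> < int N" using T unfolding N_def by auto
    ultimately show ?thesis using nd by simp
  qed
  have "(\<Sum>t=1..T. \<Sum>i=1..2*\<delta>. p t * C i * (if int N dvd ((int t - int T + 1) * gf f i + (int t - 1) * gf f j - n0) then 1 else 0))
      = (\<Sum>t=1..T. \<Sum>i=1..2*\<delta>. (if t = T - 1 \<and> i = j then p t * C i else 0) + (if i = j' then p t * C i else 0))"
    by (intro sum.cong refl tm) auto
  also have "\<dots> = (\<Sum>t=1..T. (if t = T - 1 then p t * C j else 0) + p t * C j')"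
  proof (intro sum.cong refl)
    fix t
    have j'r: "j' \<in> {1..2*\<delta>}" using j j1 unfolding j'_def by (auto elim!: oddE evenE, presburger)
    show "(\<Sum>i=1..2*\<delta>. (if t = T - 1 \<and> i = j then p t * C i else 0) + (if i = j' then p t * C i else 0))
        = (if t = T - 1 then p t * C j else 0) + p t * C j'"
      using j j'r by (simp add: sum.distrib)
  qed
  also have "\<dots> = p (T-1) * C j + (\<Sum>t=1..T. p t) * C j'"
  proof -
    have "T - 1 \<in> {1..T}" using T by auto
    then show ?thesis by (simp add: sum.distrib sum_distrib_right)
  qed
  finally have eq: "p (T-1) * C j + (\<Sum>t=1..T. p t) * C j' = 0" using KK[of N f n0] T rhs unfolding N_def by simp
  have "(\<Sum>t=1..T. p t) = p (T-1) + p T"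
  proof -
    obtain K where K: "T = Suc (Suc K)" using T by (metis add_2_eq_Suc le_Suc_ex)
    have "(\<Sum>t=1..K. p t) = 0" using pi unfolding K by auto
    then show ?thesis unfolding K by simp
  qed
  then show "p T * C (if odd j then j+1 else j-1) + (C j + C (if odd j then j+1 else j-1)) * p (T-1) = 0"
    using eq unfolding j'_def[symmetric] by (simp add: algebra_simps)
qed


lemma row_all:
  assumes L: "loss \<delta> H Tmax A B P = 0" and T: "T \<in> {2..Tmax}" and j: "j \<in> {1..2*\<delta>}"
  shows "P (T-1) T * Cmat H A B j j = 1"
    and "\<forall>i\<in>{1..2*\<delta>}. i \<noteq> j \<and> i \<noteq> (if odd j then j+1 else j-1) \<longrightarrow> Cmat H A B j i = 0"
    and "\<forall>t\<in>{1..<T-1}. P (T-1) t = 0"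
    and "P (T-1) T * Cmat H A B j (if odd j then j+1 else j-1) + (Cmat H A B j j + Cmat H A B j (if odd j then j+1 else j-1)) * P (T-1) (T-1) = 0"
proof -
  have T2: "T \<ge> 2" using T by auto
  have KK: "\<And>f N n0. N > 0 \<Longrightarrow> (\<Sum>t=1..T. \<Sum>i=1..2*\<delta>. P (T-1) t * Cmat H A B j i *
            (if int N dvd ((int t - int T + 1) * gf f i + (int t - 1) * gf f j - n0) then 1 else 0))
         = (if int N dvd (int T * gf f j - n0) then 1 else 0)"
  proof -
    fix f N n0 assume N: "(N::nat) > 0"
    have hyp: "\<And>r. model \<delta> H A B P (tmu f N r) T j = evec (tmu f N r) (T+1) j"
      by (rule pointwise_loss[OF L T tmu_unit j])
    show "?thesis f N n0" by (rule K[OF N T2 hyp])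
  qed
  show ii: "P (T-1) T * Cmat H A B j j = 1" by (rule row_ii[OF KK T2 j])
  have pT: "P (T-1) T \<noteq> 0" using ii by auto
  have j1: "j \<ge> 1" using j by auto
  show iv: "\<forall>i\<in>{1..2*\<delta>}. i \<noteq> j \<and> i \<noteq> (if odd j then j+1 else j-1) \<longrightarrow> Cmat H A B j i = 0"
  proof (intro ballI impI)
    fix i assume i: "i \<in> {1..2*\<delta>}" and ne: "i \<noteq> j \<and> i \<noteq> (if odd j then j+1 else j-1)"
    define m' where "m' = (i+1) div 2"
    have m'r: "m' \<in> {1..\<delta>}" unfolding m'_def using i by auto
    have ii0: "i = 2*m'-1 \<or> i = 2*m'" unfolding m'_def by (auto elim!: oddE evenE)
    have mk: "m' \<noteq> (j+1) div 2"
    proof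
      assume eq: "m' = (j+1) div 2"
      show False
      proof (cases "odd i")
        case True
        then show False using hodd[OF j1 True] eq ne unfolding m'_def by (auto split: if_splits)
      next
        case False
        then have "i div 2 = (j+1) div 2" using eq unfolding m'_def by (auto elim!: evenE)
        then show False using heven[OF j1 False] ne by (auto split: if_splits)
      qed
    qed
    show "Cmat H A B j i = 0" by (rule row_iv[OF KK T2 j pT m'r mk ii0])
  qed
  note r = row_i_iii[OF KK T2 j ii iv]
  show "\<forall>t\<in>{1..<T-1}. P (T-1) t = 0" by (rule r(1))
  show "P (T-1) T * Cmat H A B j (if odd j then j+1 else j-1) + (Cmat H A B j j + Cmat H A B j (if odd j then j+1 else j-1)) * P (T-1) (T-1) = 0"
    by (rule r(2))
qed

theorem proposition6:
  fixes \<delta> H Tmax :: nat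
    and A B P :: "nat \<Rightarrow> nat \<Rightarrow> real"
  assumes "\<delta> \<ge> 1" and "H \<ge> 1" and "Tmax \<ge> 2"
    and "loss \<delta> H Tmax A B P = 0"
  shows "\<forall>T\<in>{2..Tmax}.
     (\<forall>t\<in>{1..<T - 1}. P (T - 1) t = 0)
   \<and> (\<forall>i\<in>{1..2 * \<delta>}. P (T - 1) T * Cmat H A B i i = 1)
   \<and> (\<forall>i\<in>{1..\<delta>}.
        P (T - 1) T * Cmat H A B (2*i - 1) (2*i)
          + (Cmat H A B (2*i - 1) (2*i - 1) + Cmat H A B (2*i - 1) (2*i)) * P (T - 1) (T - 1) = 0
      \<and> P (T - 1) T * Cmat H A B (2*i) (2*i - 1)
          + (Cmat H A B (2*i) (2*i) + Cmat H A B (2*i) (2*i - 1)) * P (T - 1) (T - 1) = 0)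
   \<and> (\<forall>i\<in>{1..\<delta>}. \<forall>j\<in>{1..2 * \<delta>} - {2*i - 1, 2*i}.
        Cmat H A B (2*i - 1) j = 0 \<and> Cmat H A B (2*i) j = 0)"
  proof (rule ballI, intro conjI)
  fix T assume T: "T \<in> {2..Tmax}"
  have one: "1 \<in> {1..2*\<delta>}" using assms(1) by auto
  show "\<forall>t\<in>{1..<T - 1}. P (T - 1) t = 0" by (rule row_all(3)[OF assms(4) T one])
  show "\<forall>i\<in>{1..2 * \<delta>}. P (T - 1) T * Cmat H A B i i = 1" using row_all(1)[OF assms(4) T] by blast
  show "\<forall>i\<in>{1..\<delta>}.
        P (T - 1) T * Cmat H A B (2*i - 1) (2*i)
          + (Cmat H A B (2*i - 1) (2*i - 1) + Cmat H A B (2*i - 1) (2*i)) * P (T - 1) (T - 1) = 0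
      \<and> P (T - 1) T * Cmat H A B (2*i) (2*i - 1)
          + (Cmat H A B (2*i) (2*i) + Cmat H A B (2*i) (2*i - 1)) * P (T - 1) (T - 1) = 0"
  proof
    fix i assume i: "i \<in> {1..\<delta>}"
    have o: "2*i - 1 \<in> {1..2*\<delta>}" "odd (2*i - 1)" "2*i - 1 + 1 = 2*i" using i by auto
    have e: "2*i \<in> {1..2*\<delta>}" "\<not> odd (2*i)" using i by auto
    show "P (T - 1) T * Cmat H A B (2*i - 1) (2*i)
          + (Cmat H A B (2*i - 1) (2*i - 1) + Cmat H A B (2*i - 1) (2*i)) * P (T - 1) (T - 1) = 0
      \<and> P (T - 1) T * Cmat H A B (2*i) (2*i - 1)
          + (Cmat H A B (2*i) (2*i) + Cmat H A B (2*i) (2*i - 1)) * P (T - 1) (T - 1) = 0"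
      using row_all(4)[OF assms(4) T o(1)] row_all(4)[OF assms(4) T e(1)] o e by simp
  qed
  show "\<forall>i\<in>{1..\<delta>}. \<forall>j\<in>{1..2 * \<delta>} - {2*i - 1, 2*i}.
        Cmat H A B (2*i - 1) j = 0 \<and> Cmat H A B (2*i) j = 0"
  proof (intro ballI)
    fix i j assume i: "i \<in> {1..\<delta>}" and j: "j \<in> {1..2 * \<delta>} - {2*i - 1, 2*i}"
    have o: "2*i - 1 \<in> {1..2*\<delta>}" "odd (2*i - 1)" "2*i - 1 + 1 = 2*i" using i by auto
    have e: "2*i \<in> {1..2*\<delta>}" "\<not> odd (2*i)" using i by auto
    show "Cmat H A B (2*i - 1) j = 0 \<and> Cmat H A B (2*i) j = 0"
      using row_all(2)[OF assms(4) T o(1)] row_all(2)[OF assms(4) T e(1)] o e j by auto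
  qed
qed

end
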